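(* Let $N\in\mathbb{N}$, $0\le\mu<L<\infty$, and let $M$ be a method which, for coefficients $\{\alpha_{i,j}\}_{i=1,\dots,N;\,j=0,\dots,i-1}$, generates iterates satisfying $w_k-w_\star=(w_0-w_\star)(1-\frac{\mu}{L}\sum_{i=0}^{k-1}\alpha_{k,i})-\sum_{i=0}^{k-1}\frac{\alpha_{k,i}}{L}\nabla\tilde f(w_i)$, $k=1,\dots,N$, where $\tilde f(x)=f(x)-\frac\mu2\|x-w_\star\|^2$. For any $d\in\mathbb{N}$, $f\in\mathcal{F}_{\mu,L}(\mathbb{R}^d)$, $w_\star\in\arg\min_w f(w)$, initial point $w_0\in\mathbb{R}^d$, and $w_N$ the output of $M$ on $f$ from $w_0$, it holds that $\|w_N-w_\star\|^2\le \mathrm{val}(R)\,\|w_0-w_\star\|^2$, where $\mathrm{val}(R)$ is the optimal value of problem (R) described in the context.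
   Context: $\mathcal{F}_{\mu,L}(\mathbb{R}^d)$ denotes the set of proper closed convex functions $f:\mathbb{R}^d\to\mathbb{R}$ such that for all $x,y$: $f(x)\le f(y)+\langle\nabla f(y);x-y\rangle+\frac L2\|x-y\|^2$ and $f(x)\ge f(y)+\langle\nabla f(y);x-y\rangle+\frac\mu2\|x-y\|^2$. Problem (R): maximize $\|w_N-w_\star\|^2$ over $d\in\mathbb{N}$ and triples $(w_i,g_i,f_i)\in\mathbb{R}^d\times\mathbb{R}^d\times\mathbb{R}$, $i\in\{\star,0,\dots,N\}$, subject to: $\|w_0-w_\star\|^2=1$, $g_\star=0$; $w_k=w_\star+(w_0-w_\star)(1-\frac{\mu}{L}\sum_{i=0}^{k-1}\alpha_{k,i})-\sum_{i=0}^{k-1}\frac{\alpha_{k,i}}{L}g_i$ for $k=1,\dots,N$; $f_i\ge f_{i+1}+\langle g_{i+1};w_i-w_{i+1}\rangle+\frac{1}{2(L-\mu)}\|g_i-g_{i+1}\|^2$ for $i=0,\dots,N-2$; $f_\star\ge f_i+\langle g_i;w_\star-w_i\rangle+\frac{1}{2(L-\mu)}\|g_i\|^2$ for $i=0,\dots,N-1$; and $f_{N-1}\ge f_\star+\frac{1}{2(L-\mu)}\|g_{N-1}\|^2$. *)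

theory Defs
  imports "HOL-Analysis.Analysis" "HOL-Library.Extended_Real"
begin

text \<open>The class F_{mu,L}(R^d): f is convex, has gradient grad at every point,
  and satisfies the L-smoothness upper bound and mu-strong convexity lower bound.
  (Properness and closedness are automatic for a real-valued differentiable function.)\<close>
definition in_F :: "real \<Rightarrow> real \<Rightarrow> ('a::euclidean_space \<Rightarrow> real) \<Rightarrow> ('a \<Rightarrow> 'a) \<Rightarrow> bool" where
  "in_F mu L f grad \<longleftrightarrow>
     convex_on UNIV f \<and>
     (\<forall>x. (f has_derivative (\<lambda>h. grad x \<bullet> h)) (at x)) \<and>
     (\<forall>x y. f x \<le> f y + grad y \<bullet> (x - y) + L / 2 * (norm (x - y))\<^sup>2) \<and>
     (\<forall>x y. f x \<ge> f y + grad y \<bullet> (x - y) + mu / 2 * (norm (x - y))\<^sup>2)"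

text \<open>Vectors of R^d in problem (R) are represented as functions nat => real,
  of which only the coordinates 0..d-1 are used.\<close>
definition vip :: "nat \<Rightarrow> (nat \<Rightarrow> real) \<Rightarrow> (nat \<Rightarrow> real) \<Rightarrow> real" where
  "vip d x y = (\<Sum>j<d. x j * y j)"

definition vsq :: "nat \<Rightarrow> (nat \<Rightarrow> real) \<Rightarrow> real" where
  "vsq d x = vip d x x"

text \<open>Feasibility for problem (R).  w i, g i, f i for i = 0..N; ws, fs are w_star, f_star;
  g_star = 0 has been substituted.\<close>
definition feasible_R ::
  "nat \<Rightarrow> real \<Rightarrow> real \<Rightarrow> (nat \<Rightarrow> nat \<Rightarrow> real) \<Rightarrow> nat \<Rightarrow>
   (nat \<Rightarrow> real) \<Rightarrow> real \<Rightarrow> (nat \<Rightarrow> nat \<Rightarrow> real) \<Rightarrow> (nat \<Rightarrow> nat \<Rightarrow> real) \<Rightarrow> (nat \<Rightarrow> real) \<Rightarrow> bool" where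
  "feasible_R N mu L \<alpha> d ws fs w g fv \<longleftrightarrow>
     vsq d (\<lambda>j. w 0 j - ws j) = 1 \<and>
     (\<forall>k\<in>{1..N}. \<forall>j<d. w k j = ws j + (w 0 j - ws j) * (1 - mu / L * (\<Sum>i<k. \<alpha> k i))
                                  - (\<Sum>i<k. \<alpha> k i / L * g i j)) \<and>
     (\<forall>i. i + 2 \<le> N \<longrightarrow>
        fv i \<ge> fv (i+1) + vip d (g (i+1)) (\<lambda>j. w i j - w (i+1) j)
               + 1 / (2 * (L - mu)) * vsq d (\<lambda>j. g i j - g (i+1) j)) \<and>
     (\<forall>i<N. fs \<ge> fv i + vip d (g i) (\<lambda>j. ws j - w i j) + 1 / (2 * (L - mu)) * vsq d (g i)) \<and>
     fv (N - 1) \<ge> fs + 1 / (2 * (L - mu)) * vsq d (g (N - 1))"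

definition val_R :: "nat \<Rightarrow> real \<Rightarrow> real \<Rightarrow> (nat \<Rightarrow> nat \<Rightarrow> real) \<Rightarrow> ereal" where
  "val_R N mu L \<alpha> = Sup {ereal (vsq d (\<lambda>j. w N j - ws j)) | d ws fs w g fv.
                            feasible_R N mu L \<alpha> d ws fs w g fv}"

end

theory Submission
  imports Defs
begin

lemma interp_ineq:
  fixes h :: "'a::real_inner \<Rightarrow> real" and G :: "'a \<Rightarrow> 'a"
  assumes Lp: "Lp > 0"
    and up: "\<And>x y. h x \<le> h y + G y \<bullet> (x - y) + Lp / 2 * (norm (x - y))\<^sup>2"
    and lo: "\<And>x y. h x \<ge> h y + G y \<bullet> (x - y)"
  shows "h x \<ge> h y + G y \<bullet> (x - y) + 1 / (2 * Lp) * (norm (G x - G y))\<^sup>2"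
proof -
  define D where "D = G x - G y"
  define z where "z = x - (1/Lp) *\<^sub>R D"
  have a: "h z \<ge> h y + G y \<bullet> (z - y)" by (rule lo)
  have b: "h z \<le> h x + G x \<bullet> (z - x) + Lp / 2 * (norm (z - x))\<^sup>2" by (rule up)
  have zx: "z - x = - (1/Lp) *\<^sub>R D" unfolding z_def by simp
  have n: "(norm (z - x))\<^sup>2 = (1/Lp)^2 * (norm D)\<^sup>2"
    unfolding zx using Lp by (simp add: power_divide)
  have e1: "G x \<bullet> (z - x) = - (1/Lp) * (G x \<bullet> D)" unfolding zx by simp
  have e2: "G y \<bullet> (z - y) = G y \<bullet> (x - y) - (1/Lp) * (G y \<bullet> D)"
    unfolding z_def by (simp add: inner_diff_right)
  have e3: "G x \<bullet> D - G y \<bullet> D = (norm D)\<^sup>2"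
    unfolding D_def by (simp add: power2_norm_eq_inner inner_diff_left)
  have "h y + G y \<bullet> (x - y) - (1/Lp) * (G y \<bullet> D) \<le> h x - (1/Lp) * (G x \<bullet> D) + Lp/2 * ((1/Lp)^2 * (norm D)\<^sup>2)"
    using a b unfolding n e1 e2 by linarith
  hence "h x \<ge> h y + G y \<bullet> (x - y) + (1/Lp) * (G x \<bullet> D - G y \<bullet> D) - Lp/2 * ((1/Lp)^2 * (norm D)\<^sup>2)"
    by (simp add: algebra_simps)
  moreover have "(1/Lp) * (G x \<bullet> D - G y \<bullet> D) - Lp/2 * ((1/Lp)^2 * (norm D)\<^sup>2) = 1 / (2 * Lp) * (norm D)\<^sup>2"
    unfolding e3 using Lp by (simp add: field_simps power2_eq_square)
  ultimately show ?thesis unfolding D_def by linarith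
qed

lemma coords_vip:
  fixes bs :: "'a::euclidean_space list"
  assumes "distinct bs" "set bs = Basis"
  shows "vip (length bs) (\<lambda>j. x \<bullet> bs ! j) (\<lambda>j. y \<bullet> bs ! j) = x \<bullet> y"
proof -
  have "vip (length bs) (\<lambda>j. x \<bullet> bs ! j) (\<lambda>j. y \<bullet> bs ! j) = (\<Sum>j<length bs. (\<lambda>b. (x \<bullet> b) * (y \<bullet> b)) (bs ! j))"
    unfolding vip_def by simp
  also have "\<dots> = (\<Sum>b\<in>Basis. (x \<bullet> b) * (y \<bullet> b))"
    using sum.reindex_bij_betw[OF bij_betw_nth[OF assms(1) refl assms(2)[symmetric]]] by simp
  also have "\<dots> = x \<bullet> y" by (simp add: euclidean_inner[symmetric])
  finally show ?thesis .
qed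

theorem lemma4:
  fixes N :: nat and mu L :: real and \<alpha> :: "nat \<Rightarrow> nat \<Rightarrow> real"
    and f :: "'a::euclidean_space \<Rightarrow> real" and grad :: "'a \<Rightarrow> 'a"
    and ws :: 'a and w :: "nat \<Rightarrow> 'a"
  assumes "0 \<le> mu" and "mu < L"
    and "in_F mu L f grad"
    and "\<forall>x. f ws \<le> f x"
    and "\<forall>k\<in>{1..N}. w k - ws =
           (1 - mu / L * (\<Sum>i<k. \<alpha> k i)) *\<^sub>R (w 0 - ws)
           - (\<Sum>i<k. (\<alpha> k i / L) *\<^sub>R (grad (w i) - mu *\<^sub>R (w i - ws)))"
  shows "ereal ((norm (w N - ws))\<^sup>2) \<le> val_R N mu L \<alpha> * ereal ((norm (w 0 - ws))\<^sup>2)"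
proof -
  have fup: "\<And>x y. f x \<le> f y + grad y \<bullet> (x - y) + L / 2 * (norm (x - y))\<^sup>2"
    and flo: "\<And>x y. f x \<ge> f y + grad y \<bullet> (x - y) + mu / 2 * (norm (x - y))\<^sup>2"
    using assms(3) unfolding in_F_def by auto
  have Lpos: "L > 0" using assms(1,2) by linarith
  have g0: "grad ws = 0"
  proof -
    have "f ws \<le> f (ws - (1/L) *\<^sub>R grad ws)" using assms(4) by auto
    also have "\<dots> \<le> f ws + grad ws \<bullet> (- (1/L) *\<^sub>R grad ws) + L/2 * (norm (- (1/L) *\<^sub>R grad ws))\<^sup>2"
      using fup[of "ws - (1/L) *\<^sub>R grad ws" ws] by simp
    also have "\<dots> = f ws - (1/(2*L)) * (norm (grad ws))\<^sup>2"
      using Lpos by (simp add: power_mult_distrib power2_norm_eq_inner field_simps power2_eq_square)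
        (metis power2_eq_square power2_norm_eq_inner)
    finally have "(norm (grad ws))\<^sup>2 \<le> 0" using Lpos
      by (smt (verit, ccfv_SIG) divide_pos_pos mult_pos_pos zero_less_power2)
    thus ?thesis by simp
  qed
  show ?thesis
  proof (cases "w 0 = ws")
    case True
    have "\<forall>k\<le>N. w k = ws"
    proof (intro allI impI)
      fix k assume "k \<le> N"
      thus "w k = ws"
      proof (induction k rule: less_induct)
        case (less k)
        show ?case
        proof (cases "k = 0")
          case True thus ?thesis using \<open>w 0 = ws\<close> by simp
        next
          case False
          hence "k \<in> {1..N}" using less.prems by auto
          hence "w k - ws = (1 - mu / L * (\<Sum>i<k. \<alpha> k i)) *\<^sub>R (w 0 - ws)
             - (\<Sum>i<k. (\<alpha> k i / L) *\<^sub>R (grad (w i) - mu *\<^sub>R (w i - ws)))" using assms(5) by blast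
          also have "\<dots> = 0" using less.IH less.prems \<open>w 0 = ws\<close> g0 by simp
          finally show ?thesis by simp
        qed
      qed
    qed
    hence "w N = ws" by simp
    thus ?thesis using True by (simp add: zero_ereal_def[symmetric])
  next
    case False
    define r where "r = norm (w 0 - ws)"
    have rpos: "r > 0" using False unfolding r_def by simp
    define Lp where "Lp = L - mu"
    have Lp: "Lp > 0" using assms(2) unfolding Lp_def by simp
    define F where "F x = f x - mu/2 * (norm (x - ws))\<^sup>2" for x
    define G where "G x = grad x - mu *\<^sub>R (x - ws)" for x
    have nexp: "(norm (x - ws))\<^sup>2 = (norm (x - y))\<^sup>2 + 2 * ((x - y) \<bullet> (y - ws)) + (norm (y - ws))\<^sup>2" for x y :: 'a
    proof -
      have gen: "(norm (a + b))\<^sup>2 = (norm a)\<^sup>2 + 2 * (a \<bullet> b) + (norm b)\<^sup>2" for a b :: 'a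
        by (simp add: power2_norm_eq_inner inner_add_left inner_add_right inner_commute)
      show ?thesis using gen[of "x - y" "y - ws"] by simp
    qed
    have Gi: "G y \<bullet> (x - y) = grad y \<bullet> (x - y) - mu * ((x - y) \<bullet> (y - ws))" for x y
      unfolding G_def by (simp add: inner_diff_left inner_diff_right inner_commute)
    have Fid: "F x - F y - G y \<bullet> (x - y) = f x - f y - grad y \<bullet> (x - y) - mu/2 * (norm (x - y))\<^sup>2" for x y
    proof -
      have "F x - F y - G y \<bullet> (x - y) = f x - f y - grad y \<bullet> (x - y)
         - mu/2 * ((norm (x - y))\<^sup>2 + 2 * ((x - y) \<bullet> (y - ws)) + (norm (y - ws))\<^sup>2)
         + mu/2 * (norm (y - ws))\<^sup>2 + mu * ((x - y) \<bullet> (y - ws))"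
        unfolding F_def Gi nexp[of x y] by simp
      thus ?thesis by (simp add: algebra_simps)
    qed
    have Fup: "F x \<le> F y + G y \<bullet> (x - y) + Lp / 2 * (norm (x - y))\<^sup>2" for x y
    proof -
      have "Lp / 2 * (norm (x - y))\<^sup>2 = L / 2 * (norm (x - y))\<^sup>2 - mu / 2 * (norm (x - y))\<^sup>2"
        unfolding Lp_def by (simp add: left_diff_distrib)
      thus ?thesis using fup[of x y] Fid[of x y] by linarith
    qed
    have Flo: "F x \<ge> F y + G y \<bullet> (x - y)" for x y
      using flo[of y x] Fid[of x y] by linarith
    have I: "F x \<ge> F y + G y \<bullet> (x - y) + 1 / (2 * Lp) * (norm (G x - G y))\<^sup>2" for x y
      by (rule interp_ineq[OF Lp Fup Flo])
    have Gws: "G ws = 0" unfolding G_def using g0 by simp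
    have Fws: "F ws = f ws" unfolding F_def by simp
    obtain bs where bs: "set bs = (Basis :: 'a set)" "distinct bs"
      using finite_distinct_list[OF finite_Basis] by blast
    define d where "d = length bs"
    define c where "c v = (\<lambda>j. v \<bullet> bs ! j)" for v :: 'a
    have cvip: "vip d (c x) (c y) = x \<bullet> y" for x y
      unfolding d_def c_def by (rule coords_vip[OF bs(2) bs(1)])
    have cvsq: "vsq d (c x) = (norm x)\<^sup>2" for x
      unfolding vsq_def cvip by (simp add: power2_norm_eq_inner)
    have cdiff: "(\<lambda>j. c x j - c y j) = c (x - y)" for x y
      unfolding c_def by (simp add: inner_diff_left)
    have c0: "(\<lambda>j. c x j - 0) = c x" for x by simp
    have cneg: "(\<lambda>j. 0 - c x j) = c (- x)" for x unfolding c_def by simp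
    have cneg2: "(\<lambda>j. - c x j) = c (- x)" for x unfolding c_def by simp
    define s where "s = 1 / r"
    define w' where "w' i = c (s *\<^sub>R (w i - ws))" for i
    define g' where "g' i = c (s *\<^sub>R G (w i))" for i
    define fv' where "fv' i = F (w i) / r^2" for i
    define fs' where "fs' = f ws / r^2"
    define ws' :: "nat \<Rightarrow> real" where "ws' = (\<lambda>j. 0)"
    have sr: "s * s * r^2 = 1" using rpos unfolding s_def by (simp add: power2_eq_square)
    have key: "F x / r^2 \<ge> F y / r^2 + vip d (c (s *\<^sub>R G y)) (c (s *\<^sub>R (x - y)))
       + 1 / (2 * Lp) * vsq d (c (s *\<^sub>R G x - s *\<^sub>R G y))" for x y
    proof -
      have "vip d (c (s *\<^sub>R G y)) (c (s *\<^sub>R (x - y))) = (G y \<bullet> (x - y)) / r^2"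
      proof -
        have ss: "s * s = 1 / r^2" unfolding s_def by (simp add: power2_eq_square)
        have "(s *\<^sub>R G y) \<bullet> (s *\<^sub>R (x - y)) = (s * s) * (G y \<bullet> (x - y))"
          by simp
        thus ?thesis unfolding cvip ss by simp
      qed
      moreover have "vsq d (c (s *\<^sub>R G x - s *\<^sub>R G y)) = (norm (G x - G y))\<^sup>2 / r^2"
      proof -
        have "s *\<^sub>R G x - s *\<^sub>R G y = s *\<^sub>R (G x - G y)" by (simp add: scaleR_diff_right)
        hence "(norm (s *\<^sub>R G x - s *\<^sub>R G y))\<^sup>2 = s^2 * (norm (G x - G y))\<^sup>2"
          by (simp add: power_mult_distrib)
        moreover have "s^2 = 1 / r^2" unfolding s_def by (simp add: power_divide)
        ultimately show ?thesis unfolding cvsq by simp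
      qed
      moreover have "F x / r^2 \<ge> (F y + G y \<bullet> (x - y) + 1 / (2 * Lp) * (norm (G x - G y))\<^sup>2) / r^2"
        using I[of y x] rpos by (simp add: divide_right_mono)
      ultimately show ?thesis by (simp add: add_divide_distrib)
    qed
    have feas: "feasible_R N mu L \<alpha> d ws' fs' w' g' fv'"
      unfolding feasible_R_def
    proof (intro conjI ballI allI impI)
      show "vsq d (\<lambda>j. w' 0 j - ws' j) = 1"
        unfolding ws'_def w'_def c0 cvsq using rpos by (simp add: s_def r_def)
    next
      fix k j assume k: "k \<in> {1..N}" and j: "j < d"
      have h: "w k - ws = (1 - mu / L * (\<Sum>i<k. \<alpha> k i)) *\<^sub>R (w 0 - ws)
           - (\<Sum>i<k. (\<alpha> k i / L) *\<^sub>R G (w i))" using assms(5) k unfolding G_def by blast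
      have "s *\<^sub>R (w k - ws) = (1 - mu / L * (\<Sum>i<k. \<alpha> k i)) *\<^sub>R (s *\<^sub>R (w 0 - ws))
           - (\<Sum>i<k. (\<alpha> k i / L) *\<^sub>R (s *\<^sub>R G (w i)))"
        unfolding h by (simp add: scaleR_diff_right scaleR_sum_right mult.commute)
      hence "(s *\<^sub>R (w k - ws)) \<bullet> bs ! j = ((1 - mu / L * (\<Sum>i<k. \<alpha> k i)) *\<^sub>R (s *\<^sub>R (w 0 - ws))
           - (\<Sum>i<k. (\<alpha> k i / L) *\<^sub>R (s *\<^sub>R G (w i)))) \<bullet> bs ! j" by simp
      thus "w' k j = ws' j + (w' 0 j - ws' j) * (1 - mu / L * (\<Sum>i<k. \<alpha> k i)) - (\<Sum>i<k. \<alpha> k i / L * g' i j)"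
        unfolding w'_def g'_def c_def ws'_def
        by (simp only: inner_diff_left inner_sum_left inner_scaleR_left) (simp add: mult.commute)
    next
      fix i assume "i + 2 \<le> N"
      show "fv' (i + 1) + vip d (g' (i + 1)) (\<lambda>j. w' i j - w' (i + 1) j) +
          1 / (2 * (L - mu)) * vsq d (\<lambda>j. g' i j - g' (i + 1) j) \<le> fv' i"
        using key[of "w (i+1)" "w i"] unfolding fv'_def g'_def w'_def cdiff Lp_def
        by (simp add: scaleR_diff_right)
    next
      fix i assume "i < N"
      show "fv' i + vip d (g' i) (\<lambda>j. ws' j - w' i j) + 1 / (2 * (L - mu)) * vsq d (g' i) \<le> fs'"
        using key[of "w i" ws] unfolding fv'_def g'_def w'_def fs'_def Lp_def ws'_def Gws Fws
        by (simp add: cneg cneg2 cvip cvsq scaleR_diff_right inner_diff_right)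
    next
      show "fs' + 1 / (2 * (L - mu)) * vsq d (g' (N - 1)) \<le> fv' (N - 1)"
        using key[of ws "w (N-1)"] unfolding fv'_def g'_def w'_def fs'_def Lp_def Gws Fws
        by (simp add: cvip)
    qed
    have "ereal (vsq d (\<lambda>j. w' N j - ws' j)) \<le> val_R N mu L \<alpha>"
      unfolding val_R_def using feas by (intro Sup_upper) blast
    moreover have "vsq d (\<lambda>j. w' N j - ws' j) = (norm (w N - ws))\<^sup>2 / r^2"
      unfolding ws'_def w'_def c0 cvsq using rpos by (simp add: s_def power_divide)
    ultimately have "ereal ((norm (w N - ws))\<^sup>2 / r^2) * ereal (r^2) \<le> val_R N mu L \<alpha> * ereal (r^2)"
      by (intro ereal_mult_right_mono) auto
    thus ?thesis using rpos unfolding r_def by simp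
  qed
qed

end
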